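(* Let $A$ be an $n \times n$ matrix with integer coefficients, and let $\lambda$ be a simple eigenvalue of $A$. Then \[ \kappa_{NSE}(A,\lambda) \le n^{3n}\, 2^{2n} \left(2\sqrt{n}\, H(A)\right)^{2n^3 - 2n}, \] where $H(A) = \max_{i,j}|A_{ij}|$.
   Context: Let $x, y \in \mathbb{C}^n$ be right and left eigenvectors of $A$ for $\lambda$ with $\|x\| = \|y\| = 1$ (Euclidean norm): $Ax = \lambda x$, $y^* A = \lambda y^*$, where $y^*$ is the conjugate transpose. The condition number of the eigenvalue $\lambda$ is $\kappa_{NSE}(A,\lambda) = \sec(\widehat{x,y}) = 1/|y^* x|$. *)

theory Defs
  imports "Jordan_Normal_Form.Jordan_Normal_Form_Existence"
begin

definition vnorm :: "complex vec \<Rightarrow> real" where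
  "vnorm x = sqrt (\<Sum>i<dim_vec x. (cmod (x $ i))^2)"

definition cinner :: "complex vec \<Rightarrow> complex vec \<Rightarrow> complex" where
  "cinner y x = (\<Sum>i<dim_vec x. cnj (y $ i) * x $ i)"

definition simple_eigenvalue :: "complex mat \<Rightarrow> complex \<Rightarrow> bool" where
  "simple_eigenvalue B l \<longleftrightarrow> order l (char_poly B) = 1"

text \<open>Condition number kappa_NSE, given unit right/left eigenvectors x, y.\<close>
definition kappa_NSE :: "complex vec \<Rightarrow> complex vec \<Rightarrow> real" where
  "kappa_NSE x y = 1 / cmod (cinner y x)"

definition height :: "int mat \<Rightarrow> int" where
  "height A = Max {\<bar>A $$ (i, j)\<bar> | i j. i < dim_row A \<and> j < dim_col A}"

end

theory Submission
  imports Defs "Jordan_Normal_Form.Jordan_Normal_Form_Uniqueness"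
begin



lemma ker_one_dim:
  fixes C :: "complex mat"
  assumes C: "C \<in> carrier_mat n n" and ord: "Polynomial.order l (char_poly C) = 1"
  and x: "x \<in> carrier_vec n" "x \<noteq> 0\<^sub>v n" "C *\<^sub>v x = l \<cdot>\<^sub>v x"
  and z: "z \<in> carrier_vec n" "C *\<^sub>v z = l \<cdot>\<^sub>v z"
  shows "\<exists>a. z = a \<cdot>\<^sub>v x"
proof (rule ccontr)
  assume nz: "\<not> (\<exists>a. z = a \<cdot>\<^sub>v x)"
  define B where "B = char_matrix C l"
  have B: "B \<in> carrier_mat n n" using C unfolding B_def by simp
  obtain as where "char_poly C = (\<Prod> a \<leftarrow> as. [:- a, 1:])" and "length as = n"
    using char_poly_factorized[OF C] by blast
  from jordan_nf_exists[OF C this(1)] obtain n_as where jnf: "jordan_nf C n_as" by blast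
  have "dim_gen_eigenspace C l 1 = (\<Sum> n \<leftarrow> map fst [(n, e)\<leftarrow>n_as . e = l]. min 1 n)"
    by (rule dim_gen_eigenspace[OF jnf])
  also have "\<dots> \<le> (\<Sum> n \<leftarrow> map fst [(n, e)\<leftarrow>n_as . e = l]. n)"
    by (rule sum_list_mono, simp)
  also have "\<dots> = Polynomial.order l (char_poly C)"
    unfolding jordan_nf_order[OF jnf] by (simp add: case_prod_beta' cond_case_prod_eta)
  finally have "dim_gen_eigenspace C l 1 \<le> 1" using ord by simp
  moreover have "char_matrix C l ^\<^sub>m 1 = B" using B unfolding B_def by simp
  ultimately have kd: "kernel_dim B \<le> 1" unfolding dim_gen_eigenspace_def by simp
  interpret K: kernel n n B by (unfold_locales, rule B)
  have Bv: "v \<in> carrier_vec n \<Longrightarrow> C *\<^sub>v v = l \<cdot>\<^sub>v v \<Longrightarrow> B *\<^sub>v v = 0\<^sub>v n" for v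
    unfolding B_def char_matrix_def using C
    by (subst add_mult_distrib_mat_vec[of _ n n], auto)
  have xk: "x \<in> mat_kernel B" using Bv[OF x(1) x(3)] x(1) B by (intro mat_kernelI)
  have zk: "z \<in> mat_kernel B" using Bv[OF z(1) z(2)] z(1) B by (intro mat_kernelI)
  obtain Bs where "finite Bs" "K.basis Bs" using kernel_basis_exists[OF B] by blast
  hence fd: "K.Ker.fin_dim" unfolding K.Ker.fin_dim_def K.Ker.basis_def by blast
  have xz: "x \<noteq> z"
  proof
    assume "x = z" hence "z = 1 \<cdot>\<^sub>v x" by simp
    with nz show False by blast
  qed
  have li: "K.NC.lin_indpt {x, z}"
  proof (rule K.NC.finite_lin_indpt2)
    show "{x, z} \<subseteq> carrier_vec n" using x z by auto
    fix a assume lc: "K.NC.lincomb a {x,z} = 0\<^sub>v n"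
    have comp: "a x * x $ i + a z * z $ i = 0" if i: "i < n" for i
    proof -
      have "K.NC.lincomb a {x,z} $ i = (\<Sum>v\<in>{x,z}. a v * v $ i)"
        by (rule K.NC.lincomb_index[OF i], insert x z, auto)
      thus ?thesis using lc xz i by simp
    qed
    have az: "a z = 0"
    proof (rule ccontr)
      assume "a z \<noteq> 0"
      hence "z = (- a x / a z) \<cdot>\<^sub>v x"
        using comp z(1) x(1) by (intro eq_vecI, auto simp: field_simps add_eq_0_iff2)
      with nz show False by blast
    qed
    have ax: "a x = 0"
    proof (rule ccontr)
      assume "a x \<noteq> 0"
      hence "x = 0\<^sub>v n" using comp az x(1) by (intro eq_vecI, auto)
      with x(2) show False by simp
    qed
    show "\<forall>v\<in>{x, z}. a v = 0" using ax az by auto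
  qed simp
  have "K.lin_indpt {x,z}" using li K.lindep_same[of "{x,z}"] xk zk by auto
  from K.Ker.li_le_dim(2)[OF fd _ this] xk zk have "card {x,z} \<le> K.dim" by auto
  with xz kd show False by simp
qed





lemma eig_bound:
  fixes C :: "complex mat"
  assumes C: "C \<in> carrier_mat n n" and b: "\<And>i j. i < n \<Longrightarrow> j < n \<Longrightarrow> cmod (C $$ (i,j)) \<le> b"
  and v: "v \<in> carrier_vec n" "v \<noteq> 0\<^sub>v n" "C *\<^sub>v v = \<mu> \<cdot>\<^sub>v v"
  shows "cmod \<mu> \<le> real n * b"
proof -
  have ne: "{..<n} \<noteq> {}"
  proof
    assume "{..<n} = {}" hence "n = 0" by auto
    hence "v = 0\<^sub>v n" using v(1) by auto
    with v(2) show False by simp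
  qed
  define M where "M = Max ((\<lambda>j. cmod (v $ j)) ` {..<n})"
  have "M \<in> (\<lambda>j. cmod (v $ j)) ` {..<n}" unfolding M_def using ne by (intro Max_in, auto)
  then obtain i where i: "i < n" and Mi: "M = cmod (v $ i)" by auto
  have imax: "\<And>j. j < n \<Longrightarrow> cmod (v $ j) \<le> cmod (v $ i)"
    unfolding Mi[symmetric] M_def by (intro Max_ge, auto)
  have vi: "cmod (v $ i) > 0"
  proof (rule ccontr)
    assume "\<not> ?thesis"
    hence "\<And>j. j < n \<Longrightarrow> v $ j = 0" using imax by (meson norm_le_zero_iff not_less order_trans)
    hence "v = 0\<^sub>v n" using v(1) by (intro eq_vecI, auto)
    with v(2) show False by simp
  qed
  have "\<mu> * v $ i = (C *\<^sub>v v) $ i" using v(3) i v(1) by simp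
  also have "\<dots> = (\<Sum>j<n. C $$ (i,j) * v $ j)"
    using C v(1) i by (simp add: mult_mat_vec_def scalar_prod_def atLeast0LessThan)
  finally have eq: "\<mu> * v $ i = (\<Sum>j<n. C $$ (i,j) * v $ j)" .
  have b0: "0 \<le> b" using b[OF i i] norm_ge_zero order_trans by blast
  have "cmod \<mu> * cmod (v $ i) \<le> (\<Sum>j<n. cmod (C $$ (i,j) * v $ j))"
    unfolding norm_mult[symmetric] eq by (rule norm_sum)
  also have "\<dots> \<le> (\<Sum>j<n. b * cmod (v $ i))"
    by (rule sum_mono, unfold norm_mult, rule mult_mono, insert b i imax b0, auto)
  also have "\<dots> = (real n * b) * cmod (v $ i)" by simp
  finally have "cmod \<mu> * cmod (v $ i) \<le> (real n * b) * cmod (v $ i)" .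
  thus ?thesis using mult_le_cancel_right_pos[OF vi] by blast
qed

lemma det_bound:
  fixes C :: "complex mat"
  assumes C: "C \<in> carrier_mat m m" and b: "\<And>i j. i < m \<Longrightarrow> j < m \<Longrightarrow> cmod (C $$ (i,j)) \<le> r"
  shows "cmod (det C) \<le> fact m * r ^ m"
proof -
  have "cmod (det C) \<le> (\<Sum>p\<in>{p. p permutes {0..<m}}. cmod (signof p * (\<Prod>i = 0..<m. C $$ (i, p i))))"
    unfolding det_def'[OF C] by (rule norm_sum)
  also have "\<dots> \<le> (\<Sum>p\<in>{p. p permutes {0..<m}}. r ^ m)"
  proof (rule sum_mono)
    fix p assume p: "p \<in> {p. p permutes {0..<m}}"
    have "cmod (signof p * (\<Prod>i = 0..<m. C $$ (i, p i))) = (\<Prod>i = 0..<m. cmod (C $$ (i, p i)))"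
      by (simp add: norm_mult prod_norm[symmetric] sign_def)
    also have "\<dots> \<le> (\<Prod>i = 0..<m. r)"
      by (rule prod_mono, insert p b, auto simp: permutes_def)
    finally show "cmod (signof p * (\<Prod>i = 0..<m. C $$ (i, p i))) \<le> r ^ m" by simp
  qed
  also have "\<dots> = fact m * r ^ m" by (simp add: card_permutations)
  finally show ?thesis .
qed

lemma pow_bound:
  fixes C :: "complex mat"
  assumes C: "C \<in> carrier_mat n n" and h: "h \<ge> 0" and b: "\<And>i j. i < n \<Longrightarrow> j < n \<Longrightarrow> cmod (C $$ (i,j)) \<le> h"
  shows "i < n \<Longrightarrow> j < n \<Longrightarrow> cmod ((C ^\<^sub>m k) $$ (i,j)) \<le> (real n * h) ^ k"
proof (induction k arbitrary: i j)
  case 0 thus ?case using C by (auto simp: one_mat_def)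
next
  case (Suc k)
  have Ck: "C ^\<^sub>m k \<in> carrier_mat n n" using C by simp
  have "(C ^\<^sub>m Suc k) $$ (i,j) = (\<Sum>l<n. (C ^\<^sub>m k) $$ (i,l) * C $$ (l,j))"
    using Suc.prems C Ck by (simp add: times_mat_def scalar_prod_def atLeast0LessThan)
  hence "cmod ((C ^\<^sub>m Suc k) $$ (i,j)) \<le> (\<Sum>l<n. cmod ((C ^\<^sub>m k) $$ (i,l) * C $$ (l,j)))"
    by (simp add: norm_sum)
  also have "\<dots> \<le> (\<Sum>l<n. (real n * h) ^ k * h)"
    by (rule sum_mono, unfold norm_mult, rule mult_mono, insert Suc b h, auto)
  also have "\<dots> = (real n * h) ^ Suc k" by simp
  finally show ?case .
qed

lemma coeff_prod_bound:
  assumes "\<And>a. a \<in> set as \<Longrightarrow> cmod a \<le> R"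
  shows "cmod (coeff (\<Prod>a\<leftarrow>as. [:- a, 1:]) j) \<le> (1 + R) ^ length as"
  using assms
proof (induction as arbitrary: j)
  case Nil thus ?case by (cases j, auto)
next
  case (Cons a as)
  let ?q = "\<Prod>a\<leftarrow>as. [:- a, 1:]"
  have "cmod a \<le> R" using Cons.prems by simp
  hence R: "0 \<le> R" using norm_ge_zero[of a] by linarith
  have "coeff ([:- a, 1:] * ?q) j = - a * coeff ?q j + (case j of 0 \<Rightarrow> 0 | Suc j' \<Rightarrow> coeff ?q j')"
    by (cases j) (simp_all add: mult_pCons_left)
  hence "cmod (coeff ([:- a, 1:] * ?q) j) \<le> cmod a * cmod (coeff ?q j) + cmod (case j of 0 \<Rightarrow> 0 | Suc j' \<Rightarrow> coeff ?q j')"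
    by (simp only:) (rule order_trans[OF norm_triangle_ineq], simp add: norm_mult)
  also have "\<dots> \<le> R * (1 + R) ^ length as + (1 + R) ^ length as"
    by (intro add_mono mult_mono, insert Cons R, auto split: nat.splits)
  also have "\<dots> = (1 + R) ^ length (a # as)" by (simp add: algebra_simps)
  finally show ?case by simp
qed




lemma prod_list_split_zero:
  "(\<Prod>a\<leftarrow>as. [:- a, 1:]) = monom (1::complex) (length (filter (\<lambda>a. a = 0) as)) * (\<Prod>a\<leftarrow>filter (\<lambda>a. a \<noteq> 0) as. [:- a, 1:])"
proof (induction as)
  case Nil thus ?case by simp
next
  case (Cons a as)
  show ?case
  proof (cases "a = 0")
    case True
    have "[:0, 1:] = (monom (1::complex) 1)" by (simp add: monom_altdef)
    hence "[:- a, 1:] * monom 1 (length (filter (\<lambda>a. a = 0) as)) = monom 1 (length (filter (\<lambda>a. a = 0) (a # as)))"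
      using True by (simp add: mult_monom)
    thus ?thesis using True Cons by (simp add: mult.assoc[symmetric])
  next
    case False
    have "(\<Prod>a\<leftarrow>a # as. [:- a, 1:]) = [:- a, 1:] * (\<Prod>a\<leftarrow>as. [:- a, 1:])" by simp
    also have "\<dots> = monom (1::complex) (length (filter (\<lambda>a. a = 0) as)) * ([:- a, 1:] * (\<Prod>a\<leftarrow>filter (\<lambda>a. a \<noteq> 0) as. [:- a, 1:]))"
      unfolding Cons.IH by (rule mult.left_commute)
    finally show ?thesis using False by simp
  qed
qed

lemma prod_list_le_pow:
  fixes f :: "'a \<Rightarrow> real"
  assumes "\<And>a. a \<in> set xs \<Longrightarrow> 0 \<le> f a \<and> f a \<le> R"
  shows "(\<Prod>a\<leftarrow>xs. f a) \<le> R ^ length xs"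
  using assms
proof (induction xs)
  case (Cons a xs)
  have "0 \<le> (\<Prod>a\<leftarrow>xs. f a)" using Cons.prems by (intro prod_list_nonneg, auto)
  moreover have "0 \<le> R" using Cons.prems[of a] by auto
  ultimately show ?case using Cons by (auto intro!: mult_mono)
qed simp

lemma norm_prod_list: "cmod (\<Prod>a\<leftarrow>xs. f a) = (\<Prod>a\<leftarrow>xs. cmod (f a))"
  by (induction xs, auto simp: norm_mult)

lemma coeff0_prod: "coeff (\<Prod>a\<leftarrow>xs. [:- a, 1:]) 0 = (\<Prod>a\<leftarrow>xs. - (a::complex))"
  by (induction xs, auto)

lemma prod_filter_nz: "(\<Prod>a\<leftarrow>filter (\<lambda>a. a \<noteq> 0) xs. - (a::complex)) \<noteq> 0"
  by (induction xs, auto)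

lemma nonzero_eig_lower:
  fixes N :: "int mat"
  assumes N: "N \<in> carrier_mat n n"
  and b: "\<And>i j. i < n \<Longrightarrow> j < n \<Longrightarrow> cmod (of_int (N $$ (i,j)) :: complex) \<le> b"
  and v: "v \<in> carrier_vec n" "v \<noteq> 0\<^sub>v n" "map_mat of_int N *\<^sub>v v = \<nu> \<cdot>\<^sub>v v" and nu: "\<nu> \<noteq> 0"
  shows "1 \<le> cmod \<nu> * (max 1 (real n * b)) ^ (n - 1)"
proof -
  define Nc where "Nc = (map_mat of_int N :: complex mat)"
  have Nc: "Nc \<in> carrier_mat n n" using N unfolding Nc_def by simp
  have bc: "\<And>i j. i < n \<Longrightarrow> j < n \<Longrightarrow> cmod (Nc $$ (i,j)) \<le> b" using b N unfolding Nc_def by simp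
  obtain as where cp: "char_poly Nc = (\<Prod> a \<leftarrow> as. [:- a, 1:])" and len: "length as = n"
    using char_poly_factorized[OF Nc] by blast
  have cpi: "char_poly Nc = of_int_poly (char_poly N)"
    unfolding Nc_def by (rule of_int_hom.char_poly_hom[OF N])
  define R where "R = max 1 (real n * b)"
  have R1: "1 \<le> R" unfolding R_def by simp
  have root_bound: "cmod a \<le> R" if a: "a \<in> set as" for a
  proof -
    have "poly (char_poly Nc) a = 0" unfolding cp by (rule linear_poly_root[OF a])
    hence "eigenvalue Nc a" using eigenvalue_root_char_poly[OF Nc] by simp
    then obtain w where w: "w \<in> carrier_vec n" "w \<noteq> 0\<^sub>v n" "Nc *\<^sub>v w = a \<cdot>\<^sub>v w"
      unfolding eigenvalue_def eigenvector_def using Nc by auto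
    have "cmod a \<le> real n * b" by (rule eig_bound[OF Nc bc w])
    thus ?thesis unfolding R_def by simp
  qed
  have "eigenvalue Nc \<nu>" unfolding eigenvalue_def eigenvector_def using v Nc unfolding Nc_def by auto
  hence "poly (char_poly Nc) \<nu> = 0" using eigenvalue_root_char_poly[OF Nc] by simp
  hence "\<nu> \<in> set as" unfolding cp poly_prod_list_zero_iff by auto
  define bs where "bs = filter (\<lambda>a. a \<noteq> 0) as"
  define k where "k = length (filter (\<lambda>a. a = 0) as)"
  have nubs: "\<nu> \<in> set bs" unfolding bs_def using nu \<open>\<nu> \<in> set as\<close> by simp
  have "coeff (char_poly Nc) k = coeff (\<Prod>a\<leftarrow>bs. [:- a, 1:]) 0"
    unfolding cp k_def bs_def by (subst prod_list_split_zero[of as], simp only: Polynomial.coeff_monom_mult, simp)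
  also have "\<dots> = (\<Prod>a\<leftarrow>bs. - a)" by (rule coeff0_prod)
  finally have "(\<Prod>a\<leftarrow>bs. - a) = of_int (coeff (char_poly N) k)"
    unfolding cpi of_int_hom.coeff_map_poly_hom by simp
  moreover have "(\<Prod>a\<leftarrow>bs. - a) \<noteq> 0" unfolding bs_def by (rule prod_filter_nz)
  ultimately have "1 \<le> cmod (\<Prod>a\<leftarrow>bs. - a)"
    by (metis norm_of_int of_int_0 of_int_abs of_int_1_le_iff zero_less_abs_iff int_one_le_iff_zero_less)
  also have "\<dots> = (\<Prod>a\<leftarrow>bs. cmod a)" unfolding norm_prod_list by simp
  also have "\<dots> = cmod \<nu> * (\<Prod>a\<leftarrow>remove1 \<nu> bs. cmod a)"
    by (rule prod_list_map_remove1[OF nubs])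
  also have "\<dots> \<le> cmod \<nu> * R ^ (n - 1)"
  proof (rule mult_left_mono)
    have "(\<Prod>a\<leftarrow>remove1 \<nu> bs. cmod a) \<le> R ^ length (remove1 \<nu> bs)"
      by (rule prod_list_le_pow, insert root_bound, auto simp: bs_def dest: set_remove1_subset[THEN subsetD])
    also have "\<dots> \<le> R ^ (n - 1)"
    proof (rule power_increasing[OF _ R1])
      have "length bs \<le> n" unfolding bs_def using len length_filter_le[of _ as] by simp
      thus "length (remove1 \<nu> bs) \<le> n - 1" using length_remove1[of \<nu> bs] nubs by simp
    qed
    finally show "(\<Prod>a\<leftarrow>remove1 \<nu> bs. cmod a) \<le> R ^ (n - 1)" .
  qed simp
  finally show ?thesis unfolding R_def .
qed




lemma height_bound:
  assumes A: "A \<in> carrier_mat n n" and ij: "i < n" "j < n"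
  shows "\<bar>A $$ (i,j)\<bar> \<le> height A"
proof -
  have "{\<bar>A $$ (i, j)\<bar> | i j. i < dim_row A \<and> j < dim_col A} \<subseteq> (\<lambda>(i,j). \<bar>A $$ (i,j)\<bar>) ` ({..<n} \<times> {..<n})"
    using A by auto
  hence fin: "finite {\<bar>A $$ (i, j)\<bar> | i j. i < dim_row A \<and> j < dim_col A}"
    by (rule finite_subset, auto)
  show ?thesis unfolding height_def by (rule Max_ge[OF fin], insert A ij, auto)
qed

lemma vnorm_sum: assumes "v \<in> carrier_vec n" "vnorm v = 1"
  shows "(\<Sum>i<n. (cmod (v $ i))^2) = 1"
proof -
  have "sqrt (\<Sum>i<n. (cmod (v $ i))^2) = 1" using assms unfolding vnorm_def by simp
  thus ?thesis by simp
qed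

lemma big_comp: assumes "v \<in> carrier_vec n" "vnorm v = 1"
  shows "\<exists>i<n. 1 \<le> real n * (cmod (v $ i))^2"
proof (rule ccontr)
  assume "\<not> ?thesis"
  hence lt: "\<And>i. i < n \<Longrightarrow> (cmod (v $ i))^2 < 1 / real n"
    by (metis (no_types) less_imp_of_nat_less mult.commute not_less_zero pos_less_divide_eq not_le of_nat_0_less_iff gr_zeroI)
  have s: "(\<Sum>i<n. (cmod (v $ i))^2) = 1" by (rule vnorm_sum[OF assms])
  have "n \<noteq> 0"
  proof assume "n = 0" with s show False by simp qed
  hence "(\<Sum>i<n. (cmod (v $ i))^2) < (\<Sum>i<n. 1 / real n)"
    by (intro sum_strict_mono lt, auto)
  also have "\<dots> = 1" using \<open>n \<noteq> 0\<close> by simp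
  finally show False using s by simp
qed

lemma vnorm_nz: assumes "v \<in> carrier_vec n" "vnorm v = 1" shows "v \<noteq> 0\<^sub>v n"
proof
  assume "v = 0\<^sub>v n"
  hence "(\<Sum>i<n. (cmod (v $ i))^2) = 0" by simp
  with vnorm_sum[OF assms] show False by simp
qed

lemma char_poly_coeff_bound:
  fixes C :: "complex mat"
  assumes C: "C \<in> carrier_mat n n" and b: "\<And>i j. i < n \<Longrightarrow> j < n \<Longrightarrow> cmod (C $$ (i,j)) \<le> h"
  shows "cmod (coeff (char_poly C) k) \<le> (1 + real n * h) ^ n"
proof -
  obtain as where cp: "char_poly C = (\<Prod> a \<leftarrow> as. [:- a, 1:])" and len: "length as = n"
    using char_poly_factorized[OF C] by blast
  have "cmod a \<le> real n * h" if a: "a \<in> set as" for a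
  proof -
    have "poly (char_poly C) a = 0" unfolding cp by (rule linear_poly_root[OF a])
    hence "eigenvalue C a" using eigenvalue_root_char_poly[OF C] by simp
    then obtain w where w: "w \<in> carrier_vec n" "w \<noteq> 0\<^sub>v n" "C *\<^sub>v w = a \<cdot>\<^sub>v w"
      unfolding eigenvalue_def eigenvector_def using C by auto
    show ?thesis by (rule eig_bound[OF C b w])
  qed
  from coeff_prod_bound[of as, OF this] show ?thesis unfolding cp len by simp
qed

lemma pow_eig:
  fixes C :: "complex mat"
  assumes C: "C \<in> carrier_mat n n" and x: "x \<in> carrier_vec n" "C *\<^sub>v x = l \<cdot>\<^sub>v x"
  shows "(C ^\<^sub>m k) *\<^sub>v x = l ^ k \<cdot>\<^sub>v x"
proof (induction k)
  case 0 thus ?case using x C by simp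
next
  case (Suc k)
  have "(C ^\<^sub>m Suc k) *\<^sub>v x = (C ^\<^sub>m k * C) *\<^sub>v x" by simp
  also have "\<dots> = (C ^\<^sub>m k) *\<^sub>v (C *\<^sub>v x)" using C x by (intro assoc_mult_mat_vec, auto)
  also have "\<dots> = l \<cdot>\<^sub>v ((C ^\<^sub>m k) *\<^sub>v x)" unfolding x(2) by (rule mult_mat_vec[OF _ x(1)], insert C, auto)
  also have "\<dots> = l ^ Suc k \<cdot>\<^sub>v x" unfolding Suc smult_smult_assoc by simp
  finally show ?case .
qed




lemma main_bound:
  fixes A :: "int mat" and n :: nat and l :: complex and x y :: "complex vec"
  assumes A: "A \<in> carrier_mat n n"
    and simple: "simple_eigenvalue (map_mat of_int A) l"
    and xc: "x \<in> carrier_vec n" and yc: "y \<in> carrier_vec n"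
    and xn: "vnorm x = 1" and yn: "vnorm y = 1"
    and xe: "map_mat of_int A *\<^sub>v x = l \<cdot>\<^sub>v x"
    and ye: "transpose_mat (map_mat of_int A) *\<^sub>v conjugate y = l \<cdot>\<^sub>v conjugate y"
  shows "kappa_NSE x y \<le> real n * fact (n - 1) * (cmod l + real_of_int (height A)) ^ (n - 1)
     * (max 1 (real n * (\<Sum>k<n. real n * (1 + real n * real_of_int (height A)) ^ n * (real n * real_of_int (height A)) ^ k))) ^ (n - 1)"
proof -
  define Ac where "Ac = (map_mat of_int A :: complex mat)"
  have Ac: "Ac \<in> carrier_mat n n" using A unfolding Ac_def by simp
  define H where "H = real_of_int (height A)"
  have hA: "cmod (Ac $$ (i,j)) \<le> H" if ij: "i < n" "j < n" for i j
  proof -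
    have "cmod (Ac $$ (i,j)) = real_of_int \<bar>A $$ (i,j)\<bar>" using A ij unfolding Ac_def by simp
    also have "\<dots> \<le> H" unfolding H_def using height_bound[OF A ij] by (simp only: of_int_le_iff)
    finally show ?thesis .
  qed
  define p where "p = char_poly Ac"
  have ord: "Polynomial.order l p = 1" using simple unfolding simple_eigenvalue_def p_def Ac_def .
  have x0: "x \<noteq> 0\<^sub>v n" by (rule vnorm_nz[OF xc xn])
  have y0: "y \<noteq> 0\<^sub>v n" by (rule vnorm_nz[OF yc yn])
  have n0: "n \<noteq> 0" using x0 xc by (metis carrier_vecD eq_vecI index_zero_vec(2) less_nat_zero_code)
  have H0: "0 \<le> H" using hA[of 0 0] n0 norm_ge_zero order_trans by blast
  have xe': "Ac *\<^sub>v x = l \<cdot>\<^sub>v x" using xe unfolding Ac_def .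
  define yc where "yc = conjugate y"
  define At where "At = transpose_mat Ac"
  have At: "At \<in> carrier_mat n n" using Ac unfolding At_def by simp
  have ycc: "yc \<in> carrier_vec n" using yc unfolding yc_def by simp
  have yc0: "yc \<noteq> 0\<^sub>v n" using y0 unfolding yc_def by simp
  have ye': "At *\<^sub>v yc = l \<cdot>\<^sub>v yc" using ye unfolding At_def yc_def Ac_def .
  have ycomp: "\<And>j. j < n \<Longrightarrow> yc $ j = cnj (y $ j)" unfolding yc_def using yc by simp
  have lH: "cmod l \<le> real n * H" by (rule eig_bound[OF Ac hA xc x0 xe'])
  have "eigenvalue Ac l" unfolding eigenvalue_def eigenvector_def using xc x0 xe' Ac by auto
  hence proot: "poly p l = 0" unfolding p_def using eigenvalue_root_char_poly[OF Ac] by simp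
  have degp: "degree p = n" unfolding p_def using degree_monic_char_poly[OF Ac] by simp
  have p0: "p \<noteq> 0" using degp n0 by auto
  have "pderiv p \<noteq> 0" using degp n0 pderiv_eq_0_iff[of p] by simp
  have "Polynomial.order l p = Suc (Polynomial.order l (pderiv p))" by (rule order_pderiv[OF p0 proot])
  hence "Polynomial.order l (pderiv p) = 0" using ord by simp
  hence nu0: "poly (pderiv p) l \<noteq> 0" using order_root[of "pderiv p" l] \<open>pderiv p \<noteq> 0\<close> by simp
  define \<nu> where "\<nu> = poly (pderiv p) l"

  define B where "B = mat n n (\<lambda>(i,j). (if i = j then l else 0) - Ac $$ (i,j))"
  have B: "B \<in> carrier_mat n n" unfolding B_def by simp
  have BC: "B = - char_matrix Ac l"
    by (rule eq_matI, insert Ac, auto simp: B_def char_matrix_def)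
  have detB: "det B = 0" using proot unfolding p_def char_poly_matrix[OF Ac] BC .
  have Bdel: "mat_delete B i i = - char_matrix (mat_delete Ac i i) l" if i: "i < n" for i
    by (rule eq_matI, insert Ac i, auto simp: B_def char_matrix_def mat_delete_def)
  have cof: "cofactor B i i = poly (char_poly (mat_delete Ac i i)) l" if i: "i < n" for i
  proof -
    have "cofactor B i i = det (mat_delete B i i)" unfolding cofactor_def by simp
    also have "\<dots> = poly (char_poly (mat_delete Ac i i)) l" unfolding Bdel[OF i]
      by (rule char_poly_matrix[symmetric], rule mat_delete_carrier[OF Ac])
    finally show ?thesis .
  qed
  define M where "M = adj_mat B"
  have M: "M \<in> carrier_mat n n" unfolding M_def by (rule adj_mat(1)[OF B])
  have z0: "(0::complex) \<cdot>\<^sub>m 1\<^sub>m n = 0\<^sub>m n n" by (rule eq_matI, auto)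
  have BM: "B * M = 0\<^sub>m n n" using adj_mat(2)[OF B] unfolding M_def detB z0 .
  have MB: "M * B = 0\<^sub>m n n" using adj_mat(3)[OF B] unfolding M_def detB z0 .
  have sumdelta: "(\<Sum>k<n. (if i = k then l else 0) * f k) = l * f i" if "i < n" for i and f :: "nat \<Rightarrow> complex"
    using that by (simp add: if_distrib[of "\<lambda>z. z * _"] cong: if_cong)
  have sumdelta2: "(\<Sum>k<n. f k * (if k = j then l else 0)) = f j * l" if "j < n" for j and f :: "nat \<Rightarrow> complex"
    using that by (simp add: if_distrib[of "\<lambda>z. _ * z"] cong: if_cong)
  have AM: "(\<Sum>k<n. Ac $$ (i,k) * M $$ (k,j)) = l * M $$ (i,j)" if ij: "i < n" "j < n" for i j
  proof -
    have "0 = (B * M) $$ (i,j)" using BM ij by simp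
    also have "\<dots> = (\<Sum>k<n. B $$ (i,k) * M $$ (k,j))"
      using B M ij by (simp add: scalar_prod_def atLeast0LessThan)
    also have "\<dots> = (\<Sum>k<n. (if i = k then l else 0) * M $$ (k,j)) - (\<Sum>k<n. Ac $$ (i,k) * M $$ (k,j))"
      unfolding sum_subtractf[symmetric] using ij by (intro sum.cong, auto simp: B_def algebra_simps)
    also have "\<dots> = l * M $$ (i,j) - (\<Sum>k<n. Ac $$ (i,k) * M $$ (k,j))" using sumdelta[OF ij(1)] by simp
    finally show ?thesis by simp
  qed
  have MA: "(\<Sum>k<n. M $$ (i,k) * Ac $$ (k,j)) = l * M $$ (i,j)" if ij: "i < n" "j < n" for i j
  proof -
    have "0 = (M * B) $$ (i,j)" using MB ij by simp
    also have "\<dots> = (\<Sum>k<n. M $$ (i,k) * B $$ (k,j))"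
      using B M ij by (simp add: scalar_prod_def atLeast0LessThan)
    also have "\<dots> = (\<Sum>k<n. M $$ (i,k) * (if k = j then l else 0)) - (\<Sum>k<n. M $$ (i,k) * Ac $$ (k,j))"
      unfolding sum_subtractf[symmetric] using ij by (intro sum.cong, auto simp: B_def algebra_simps)
    also have "\<dots> = M $$ (i,j) * l - (\<Sum>k<n. M $$ (i,k) * Ac $$ (k,j))" using sumdelta2[OF ij(2)] by simp
    finally show ?thesis by (simp add: mult.commute)
  qed
  have ordt: "Polynomial.order l (char_poly At) = 1" using ord unfolding p_def At_def char_poly_transpose_mat[OF Ac] .
  have "\<forall>j\<in>{..<n}. \<exists>a. col M j = a \<cdot>\<^sub>v x"
  proof
    fix j assume "j \<in> {..<n}" hence j: "j < n" by simp
    have cc: "col M j \<in> carrier_vec n" using col_dim[of M j] M by simp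
    have "Ac *\<^sub>v col M j = l \<cdot>\<^sub>v col M j"
    proof (rule eq_vecI)
      fix i assume "i < dim_vec (l \<cdot>\<^sub>v col M j)" hence i: "i < n" using M by simp
      have "(Ac *\<^sub>v col M j) $ i = (\<Sum>k<n. Ac $$ (i,k) * M $$ (k,j))"
        using Ac M i j by (simp add: scalar_prod_def atLeast0LessThan)
      also have "\<dots> = l * M $$ (i,j)" by (rule AM[OF i j])
      finally show "(Ac *\<^sub>v col M j) $ i = (l \<cdot>\<^sub>v col M j) $ i" using M i j by simp
    qed (insert Ac M, simp)
    from ker_one_dim[OF Ac ord[unfolded p_def] xc x0 xe' cc this] show "\<exists>a. col M j = a \<cdot>\<^sub>v x" .
  qed
  from bchoice[OF this] obtain \<alpha> where \<alpha>: "\<And>j. j < n \<Longrightarrow> col M j = \<alpha> j \<cdot>\<^sub>v x" by auto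
  have "\<forall>i\<in>{..<n}. \<exists>a. row M i = a \<cdot>\<^sub>v yc"
  proof
    fix i assume "i \<in> {..<n}" hence i: "i < n" by simp
    have cc: "row M i \<in> carrier_vec n" using row_carrier[of M i] M by simp
    have "At *\<^sub>v row M i = l \<cdot>\<^sub>v row M i"
    proof (rule eq_vecI)
      fix j assume "j < dim_vec (l \<cdot>\<^sub>v row M i)" hence j: "j < n" using M by simp
      have "(At *\<^sub>v row M i) $ j = (\<Sum>k<n. Ac $$ (k,j) * M $$ (i,k))"
        using Ac M i j by (simp add: At_def scalar_prod_def atLeast0LessThan)
      also have "\<dots> = (\<Sum>k<n. M $$ (i,k) * Ac $$ (k,j))" by (simp add: mult.commute)
      also have "\<dots> = l * M $$ (i,j)" by (rule MA[OF i j])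
      finally show "(At *\<^sub>v row M i) $ j = (l \<cdot>\<^sub>v row M i) $ j" using M i j by simp
    qed (insert At M, simp)
    from ker_one_dim[OF At ordt ycc yc0 ye' cc this] show "\<exists>a. row M i = a \<cdot>\<^sub>v yc" .
  qed
  from bchoice[OF this] obtain \<beta> where \<beta>: "\<And>i. i < n \<Longrightarrow> row M i = \<beta> i \<cdot>\<^sub>v yc" by auto
  have Ma: "M $$ (i,j) = \<alpha> j * x $ i" if ij: "i < n" "j < n" for i j
  proof -
    have "M $$ (i,j) = col M j $ i" using M ij by simp
    thus ?thesis unfolding \<alpha>[OF ij(2)] using xc ij by simp
  qed
  have Mb: "M $$ (i,j) = \<beta> i * cnj (y $ j)" if ij: "i < n" "j < n" for i j
  proof -
    have "M $$ (i,j) = row M i $ j" using M ij by simp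
    thus ?thesis unfolding \<beta>[OF ij(1)] using ycc ij ycomp by simp
  qed
  obtain i0 where i0: "i0 < n" and xi0: "1 \<le> real n * (cmod (x $ i0))^2" using big_comp[OF xc xn] by blast
  obtain j0 where j0: "j0 < n" and yj0: "1 \<le> real n * (cmod (y $ j0))^2" using big_comp[OF yc yn] by blast
  have xi0z: "x $ i0 \<noteq> 0" using xi0 by auto
  define c where "c = \<beta> i0 / x $ i0"
  have Mc: "M $$ (i,j) = c * x $ i * cnj (y $ j)" if ij: "i < n" "j < n" for i j
  proof -
    have "\<alpha> j * x $ i0 = \<beta> i0 * cnj (y $ j)" using Ma[OF i0 ij(2)] Mb[OF i0 ij(2)] by simp
    hence "\<alpha> j = c * cnj (y $ j)" unfolding c_def using xi0z by (simp add: field_simps)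
    thus ?thesis using Ma[OF ij] by simp
  qed
  have "(\<Sum>i<n. M $$ (i,i)) = (\<Sum>i<n. poly (char_poly (mat_delete Ac i i)) l)"
    by (rule sum.cong, insert B cof, auto simp: M_def adj_mat_def)
  also have "\<dots> = poly (\<Sum>i<n. char_poly (mat_delete Ac i i)) l" by (simp add: poly_sum)
  also have "\<dots> = \<nu>" unfolding \<nu>_def p_def pderiv_char_poly[OF Ac] ..
  finally have tr1: "(\<Sum>i<n. M $$ (i,i)) = \<nu>" .
  have "(\<Sum>i<n. M $$ (i,i)) = c * cinner y x"
    unfolding cinner_def sum_distrib_left using xc by (intro sum.cong, auto simp: Mc)
  hence nuc: "\<nu> = c * cinner y x" using tr1 by simp
  have cinz: "cinner y x \<noteq> 0" and c0: "c \<noteq> 0" using nuc nu0 unfolding \<nu>_def by auto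
  have kap: "kappa_NSE x y = cmod c / cmod \<nu>"
    unfolding kappa_NSE_def nuc using c0 by (simp add: norm_mult)
  have "1 \<le> (real n * cmod (x $ i0) * cmod (y $ j0))^2"
  proof -
    have "1 \<le> (real n * (cmod (x $ i0))^2) * (real n * (cmod (y $ j0))^2)"
      using xi0 yj0 by (metis mult_mono' mult_1 zero_le_one)
    thus ?thesis by (simp add: power2_eq_square algebra_simps)
  qed
  hence xy1: "1 \<le> real n * cmod (x $ i0) * cmod (y $ j0)"
    using power2_le_imp_le[of 1 "real n * cmod (x $ i0) * cmod (y $ j0)"] by simp
  have cM: "cmod c \<le> real n * cmod (M $$ (i0, j0))"
  proof -
    have eq: "cmod (M $$ (i0, j0)) = cmod c * (cmod (x $ i0) * cmod (y $ j0))"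
      using Mc[OF i0 j0] by (simp add: norm_mult)
    have "cmod c * 1 \<le> cmod c * (real n * cmod (x $ i0) * cmod (y $ j0))"
      using xy1 by (intro mult_left_mono, auto)
    also have "\<dots> = real n * cmod (M $$ (i0, j0))" unfolding eq by simp
    finally show ?thesis by simp
  qed
  have Bb: "cmod (B $$ (i,k)) \<le> cmod l + H" if ik: "i < n" "k < n" for i k
  proof -
    have "cmod (B $$ (i,k)) \<le> cmod (if i = k then l else 0) + cmod (Ac $$ (i,k))"
      unfolding B_def using ik by (simp add: norm_triangle_ineq4)
    also have "\<dots> \<le> cmod l + H" using hA[OF ik] by (intro add_mono, auto)
    finally show ?thesis .
  qed
  have Kb: "cmod (M $$ (i0,j0)) \<le> fact (n - 1) * (cmod l + H) ^ (n - 1)"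
  proof -
    have "M $$ (i0,j0) = cofactor B j0 i0" unfolding M_def adj_mat_def using B i0 j0 by simp
    hence "cmod (M $$ (i0,j0)) = cmod (det (mat_delete B j0 i0))" unfolding cofactor_def
      by (simp add: norm_mult norm_power)
    also have "\<dots> \<le> fact (n - 1) * (cmod l + H) ^ (n - 1)"
    proof (rule det_bound[OF mat_delete_carrier[OF B]])
      fix a b assume ab: "a < n - 1" "b < n - 1"
      have "mat_delete B j0 i0 $$ (a,b) = B $$ (if a < j0 then a else Suc a, if b < i0 then b else Suc b)"
        using B ab by (simp add: mat_delete_def)
      also have "cmod \<dots> \<le> cmod l + H" by (rule Bb, insert ab, auto)
      finally show "cmod (mat_delete B j0 i0 $$ (a,b)) \<le> cmod l + H" .
    qed
    finally show ?thesis .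
  qed
  define g where "g = pderiv (char_poly A)"
  have pg: "pderiv p = of_int_poly g"
    by (simp add: p_def g_def Ac_def of_int_hom.char_poly_hom[OF A] of_int_hom.map_poly_pderiv)
  have gcoef: "coeff (pderiv p) k = of_int (coeff g k)" for k unfolding pg by simp
  have degq: "degree (pderiv p) < n" using degp n0 degree_pderiv[of p] by simp
  have nu_sum: "\<nu> = (\<Sum>k<n. coeff (pderiv p) k * l ^ k)"
    unfolding \<nu>_def poly_altdef
    by (rule sum.mono_neutral_left, insert degq, auto simp: coeff_eq_0)
  define N where "N = mat n n (\<lambda>(i,j). \<Sum>k<n. coeff g k * (A ^\<^sub>m k) $$ (i,j))"
  have N: "N \<in> carrier_mat n n" unfolding N_def by simp
  have Apow: "map_mat of_int (A ^\<^sub>m k) = Ac ^\<^sub>m k" for k unfolding Ac_def by (rule of_int_hom.mat_hom_pow[OF A])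
  have Apow_idx: "(Ac ^\<^sub>m k) $$ (i,j) = of_int ((A ^\<^sub>m k) $$ (i,j))" if ij: "i < n" "j < n" for i j k
    unfolding Apow[symmetric] using ij A by simp
  have Nc: "(of_int (N $$ (i,j)) :: complex) = (\<Sum>k<n. of_int (coeff g k) * (Ac ^\<^sub>m k) $$ (i,j))"
    if ij: "i < n" "j < n" for i j
    unfolding N_def using ij by (simp add: Apow_idx)
  have Nx: "map_mat of_int N *\<^sub>v x = \<nu> \<cdot>\<^sub>v x"
  proof (rule eq_vecI)
    fix i assume "i < dim_vec (\<nu> \<cdot>\<^sub>v x)" hence i: "i < n" using xc by simp
    have "(map_mat of_int N *\<^sub>v x) $ i = (\<Sum>j<n. of_int (N $$ (i,j)) * x $ j)"
      using N xc i by (simp add: scalar_prod_def atLeast0LessThan)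
    also have "\<dots> = (\<Sum>j<n. \<Sum>k<n. of_int (coeff g k) * (Ac ^\<^sub>m k) $$ (i,j) * x $ j)"
      by (rule sum.cong, simp_all add: Nc i sum_distrib_right)
    also have "\<dots> = (\<Sum>k<n. of_int (coeff g k) * (\<Sum>j<n. (Ac ^\<^sub>m k) $$ (i,j) * x $ j))"
      by (subst sum.swap, simp add: sum_distrib_left mult.assoc)
    also have "\<dots> = (\<Sum>k<n. of_int (coeff g k) * (l ^ k * x $ i))"
    proof (rule sum.cong[OF refl])
      fix k
      have "(\<Sum>j<n. (Ac ^\<^sub>m k) $$ (i,j) * x $ j) = ((Ac ^\<^sub>m k) *\<^sub>v x) $ i"
        using Ac xc i by (simp add: scalar_prod_def atLeast0LessThan)
      also have "\<dots> = l ^ k * x $ i" unfolding pow_eig[OF Ac xc xe'] using xc i by simp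
      finally show "of_int (coeff g k) * (\<Sum>j<n. (Ac ^\<^sub>m k) $$ (i,j) * x $ j) = of_int (coeff g k) * (l ^ k * x $ i)"
        by simp
    qed
    also have "\<dots> = \<nu> * x $ i" unfolding nu_sum gcoef sum_distrib_right by (simp add: ac_simps)
    finally show "(map_mat of_int N *\<^sub>v x) $ i = (\<nu> \<cdot>\<^sub>v x) $ i" using xc i by simp
  qed (insert N xc, simp)
  define b where "b = (\<Sum>k<n. real n * (1 + real n * H) ^ n * (real n * H) ^ k)"
  have gb: "cmod (of_int (coeff g k) :: complex) \<le> real n * (1 + real n * H) ^ n" if k: "k < n" for k
  proof -
    have "cmod (of_int (coeff g k) :: complex) = real (Suc k) * cmod (coeff p (Suc k))"
      unfolding gcoef[symmetric] coeff_pderiv by (simp add: norm_mult del: of_nat_Suc)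
    also have "\<dots> \<le> real n * (1 + real n * H) ^ n"
      by (rule mult_mono, insert k, auto simp: p_def intro: char_poly_coeff_bound[OF Ac hA])
    finally show ?thesis .
  qed
  have bN: "cmod (of_int (N $$ (i,j)) :: complex) \<le> b" if ij: "i < n" "j < n" for i j
  proof -
    have "cmod (of_int (N $$ (i,j)) :: complex) \<le> (\<Sum>k<n. cmod (of_int (coeff g k) :: complex) * cmod ((Ac ^\<^sub>m k) $$ (i,j)))"
      unfolding Nc[OF ij] by (rule order_trans[OF norm_sum], simp add: norm_mult)
    also have "\<dots> \<le> b" unfolding b_def
      by (rule sum_mono, rule mult_mono, insert gb pow_bound[OF Ac H0 hA ij] H0, auto)
    finally show ?thesis .
  qed
  have low: "1 \<le> cmod \<nu> * (max 1 (real n * b)) ^ (n - 1)"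
    by (rule nonzero_eig_lower[OF N bN xc x0 Nx], insert nu0, auto simp: \<nu>_def)
  define R where "R = (max 1 (real n * b)) ^ (n - 1)"
  have nupos: "0 < cmod \<nu>" using nu0 unfolding \<nu>_def by simp
  have "kappa_NSE x y = cmod c / cmod \<nu>" by (rule kap)
  also have "\<dots> \<le> cmod c * R"
    unfolding pos_divide_le_eq[OF nupos] using low unfolding R_def[symmetric]
    by (metis mult.assoc mult_left_mono mult.right_neutral norm_ge_zero mult.commute)
  also have "\<dots> \<le> (real n * (fact (n - 1) * (cmod l + H) ^ (n - 1))) * R"
    by (rule mult_right_mono, rule order_trans[OF cM], rule mult_left_mono[OF Kb], auto simp: R_def)
  finally show ?thesis unfolding R_def b_def H_def by (simp add: ac_simps)
qed




lemma exp_ineq: assumes "(n::nat) \<ge> 3" shows "1 + (n - 1) + (n - 1) + (2 * n + 2) * (n - 1) \<le> n ^ 3 - n"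
proof -
  obtain m where n: "n = m + 3" using assms by (metis add.commute le_Suc_ex)
  have "(m + 3) ^ 3 = m^3 + 9*m^2 + 27*m + 27" by (simp add: power3_eq_cube power2_eq_square algebra_simps)
  hence e: "n ^ 3 - n = m^3 + 9*m^2 + 26*m + 24" unfolding n by simp
  have "1 + (n - 1) + (n - 1) + (2 * n + 2) * (n - 1) = 2*m^2 + 14*m + 21"
    unfolding n by (simp add: power2_eq_square algebra_simps)
  also have "\<dots> \<le> m^3 + 9*m^2 + 26*m + 24" by simp
  finally show ?thesis unfolding e .
qed

lemma final_arith:
  fixes n :: nat and H L :: real
  assumes n2: "n \<ge> 2" and H1: "1 \<le> H" and L: "L \<le> real n * H" "0 \<le> L"
  shows "real n * fact (n - 1) * (L + H) ^ (n - 1)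
     * (max 1 (real n * (\<Sum>k<n. real n * (1 + real n * H) ^ n * (real n * H) ^ k))) ^ (n - 1)
   \<le> real n ^ (3 * n) * 2 ^ (2 * n) * (2 * sqrt (real n) * H) ^ (2 * n ^ 3 - 2 * n)"
proof -
  define Q where "Q = (real n + 1) * H"
  have n1: "1 \<le> real n" using n2 by simp
  have nH: "1 \<le> real n * H" using mult_mono[OF n1 H1] by simp
  have Q1: "1 \<le> Q" unfolding Q_def using nH H1 by (simp add: algebra_simps)
  have Q0: "0 \<le> Q" using Q1 by simp
  have nQ: "real n \<le> Q"
  proof -
    have "real n * 1 \<le> (real n + 1) * H" by (rule mult_mono, insert H1, auto)
    thus ?thesis unfolding Q_def by simp
  qed
  have nHQ: "real n * H \<le> Q" unfolding Q_def using H1 by (simp add: algebra_simps)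
  have n1H: "1 + real n * H \<le> Q" unfolding Q_def using H1 by (simp add: algebra_simps)
  have LH: "L + H \<le> Q" unfolding Q_def using L by (simp add: algebra_simps)
  have f: "fact (n - 1) \<le> Q ^ (n - 1)"
  proof -
    have "(fact (n - 1) :: real) \<le> real ((n - 1) ^ (n - 1))" by (rule fact_le_power)
    also have "\<dots> = real (n - 1) ^ (n - 1)" by simp
    also have "\<dots> \<le> Q ^ (n - 1)" by (rule power_mono, insert nQ n2, auto)
    finally show ?thesis .
  qed
  have trm: "real n * (1 + real n * H) ^ n * (real n * H) ^ k \<le> Q * Q ^ n * Q ^ (n - 1)" if k: "k < n" for k
  proof -
    have "(real n * H) ^ k \<le> (real n * H) ^ (n - 1)" by (rule power_increasing, insert k nH, auto)
    also have "\<dots> \<le> Q ^ (n - 1)" by (rule power_mono[OF nHQ], insert nH, auto)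
    finally have a: "(real n * H) ^ k \<le> Q ^ (n - 1)" .
    have b: "(1 + real n * H) ^ n \<le> Q ^ n" by (rule power_mono[OF n1H], insert nH, auto)
    show ?thesis by (intro mult_mono a b nQ, insert Q0 nH, auto)
  qed
  have "(\<Sum>k<n. real n * (1 + real n * H) ^ n * (real n * H) ^ k) \<le> (\<Sum>k<n. Q * Q ^ n * Q ^ (n - 1))"
    by (rule sum_mono, rule trm, auto)
  also have "\<dots> = real n * (Q * Q ^ n * Q ^ (n - 1))" by simp
  also have "\<dots> \<le> Q * (Q * Q ^ n * Q ^ (n - 1))" by (rule mult_right_mono[OF nQ], insert Q0, auto)
  finally have s: "(\<Sum>k<n. real n * (1 + real n * H) ^ n * (real n * H) ^ k) \<le> Q * (Q * Q ^ n * Q ^ (n - 1))" .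
  have "real n * (\<Sum>k<n. real n * (1 + real n * H) ^ n * (real n * H) ^ k) \<le> Q * (Q * (Q * Q ^ n * Q ^ (n - 1)))"
    by (rule mult_mono[OF nQ s], insert Q0 nH, auto intro!: sum_nonneg)
  also have "\<dots> = Q ^ (3 + n + (n - 1))" by (simp add: power_add power3_eq_cube ac_simps)
  also have "3 + n + (n - 1) = 2 * n + 2" using n2 by simp
  finally have s2: "real n * (\<Sum>k<n. real n * (1 + real n * H) ^ n * (real n * H) ^ k) \<le> Q ^ (2 * n + 2)" .
  have R: "max 1 (real n * (\<Sum>k<n. real n * (1 + real n * H) ^ n * (real n * H) ^ k)) \<le> Q ^ (2 * n + 2)"
    by (rule max.boundedI[OF one_le_power[OF Q1] s2])
  have "real n * fact (n - 1) * (L + H) ^ (n - 1)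
     * (max 1 (real n * (\<Sum>k<n. real n * (1 + real n * H) ^ n * (real n * H) ^ k))) ^ (n - 1)
     \<le> Q * Q ^ (n - 1) * Q ^ (n - 1) * (Q ^ (2 * n + 2)) ^ (n - 1)"
    by (intro mult_mono nQ f power_mono LH R, insert L H1 Q0, auto)
  also have "\<dots> = Q ^ (1 + (n - 1) + (n - 1) + (2 * n + 2) * (n - 1))"
    by (simp only: power_add power_mult power_one_right)
  finally have lhs: "real n * fact (n - 1) * (L + H) ^ (n - 1)
     * (max 1 (real n * (\<Sum>k<n. real n * (1 + real n * H) ^ n * (real n * H) ^ k))) ^ (n - 1)
     \<le> Q ^ (1 + (n - 1) + (n - 1) + (2 * n + 2) * (n - 1))" .
  have sq: "(2 * sqrt (real n) * H) ^ (2 * n ^ 3 - 2 * n) = (4 * real n * H^2) ^ (n ^ 3 - n)"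
  proof -
    have "2 * n ^ 3 - 2 * n = 2 * (n ^ 3 - n)" by (simp add: diff_mult_distrib2)
    hence "(2 * sqrt (real n) * H) ^ (2 * n ^ 3 - 2 * n) = ((2 * sqrt (real n) * H) ^ 2) ^ (n ^ 3 - n)"
      by (simp add: power_mult)
    also have "(2 * sqrt (real n) * H) ^ 2 = 4 * real n * H^2" by (simp add: power_mult_distrib)
    finally show ?thesis .
  qed
  have rhs1: "1 \<le> real n ^ (3 * n) * 2 ^ (2 * n)" using mult_mono[OF one_le_power[OF n1, of "3 * n"] one_le_power[of "2::real" "2 * n"]] by simp
  have base: "0 \<le> 4 * real n * H^2" by simp
  show ?thesis
  proof (cases "n = 2")
    case True
    have "Q ^ (1 + (n - 1) + (n - 1) + (2 * n + 2) * (n - 1)) = 19683 * H ^ 9" unfolding Q_def True by (simp add: power_mult_distrib)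
    also have "\<dots> \<le> 19683 * H ^ 12" by (rule mult_left_mono, rule power_increasing, insert H1, auto)
    also have "\<dots> \<le> real n ^ (3 * n) * 2 ^ (2 * n) * (4 * real n * H^2) ^ (n ^ 3 - n)"
      unfolding True by (simp add: power_mult_distrib power_mult[symmetric])
    finally show ?thesis using lhs unfolding sq by linarith
  next
    case False
    hence n3: "n \<ge> 3" using n2 by simp
    have "Q ^ (1 + (n - 1) + (n - 1) + (2 * n + 2) * (n - 1)) \<le> Q ^ (n ^ 3 - n)"
      by (rule power_increasing[OF exp_ineq[OF n3] Q1])
    also have "\<dots> \<le> (4 * real n * H^2) ^ (n ^ 3 - n)"
    proof (rule power_mono[OF _ Q0])
      have "(real n + 1) * H \<le> (4 * real n) * H" using n2 H1 by (intro mult_right_mono, auto)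
      also have "\<dots> \<le> (4 * real n) * H^2" using H1 n2 by (intro mult_left_mono, auto simp: power2_eq_square)
      finally show "Q \<le> 4 * real n * H^2" unfolding Q_def .
    qed
    also have "\<dots> \<le> real n ^ (3 * n) * 2 ^ (2 * n) * (4 * real n * H^2) ^ (n ^ 3 - n)"
      using rhs1 base by (simp add: mult_le_cancel_right1 zero_le_power)
    finally show ?thesis using lhs unfolding sq by linarith
  qed
qed




lemma entries_bound:
  assumes A: "A \<in> carrier_mat n n" and ij: "i < n" "j < n"
  shows "cmod (map_mat of_int A $$ (i,j) :: complex) \<le> real_of_int (height A)"
proof -
  have "cmod (map_mat of_int A $$ (i,j) :: complex) = real_of_int \<bar>A $$ (i,j)\<bar>" using A ij by simp
  also have "\<dots> \<le> real_of_int (height A)" using height_bound[OF A ij] by (simp only: of_int_le_iff)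
  finally show ?thesis .
qed

lemma l_bound:
  assumes A: "A \<in> carrier_mat n n" and xc: "x \<in> carrier_vec n" and xn: "vnorm x = 1"
    and xe: "map_mat of_int A *\<^sub>v x = l \<cdot>\<^sub>v x"
  shows "cmod l \<le> real n * real_of_int (height A)"
  by (rule eig_bound[OF _ entries_bound[OF A] xc vnorm_nz[OF xc xn] xe], insert A, auto)

lemma height_pos:
  assumes A: "A \<in> carrier_mat n n"
    and simple: "simple_eigenvalue (map_mat of_int A) l"
    and xc: "x \<in> carrier_vec n" and xn: "vnorm x = 1"
    and xe: "map_mat of_int A *\<^sub>v x = l \<cdot>\<^sub>v x"
    and n2: "n \<ge> 2"
  shows "1 \<le> height A"
proof (rule ccontr)
  assume "\<not> 1 \<le> height A"
  moreover have "0 \<le> height A" using height_bound[OF A, of 0 0] n2 by simp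
  ultimately have hz: "height A = 0" by simp
  define Ac where "Ac = (map_mat of_int A :: complex mat)"
  have Ac: "Ac \<in> carrier_mat n n" using A unfolding Ac_def by simp
  have hA: "cmod (Ac $$ (i,j)) \<le> 0" if "i < n" "j < n" for i j
    using entries_bound[OF A that] hz unfolding Ac_def by simp
  obtain as where cp: "char_poly Ac = (\<Prod> a \<leftarrow> as. [:- a, 1:])" and len: "length as = n"
    using char_poly_factorized[OF Ac] by blast
  have "a = 0" if a: "a \<in> set as" for a
  proof -
    have "poly (char_poly Ac) a = 0" unfolding cp by (rule linear_poly_root[OF a])
    hence "eigenvalue Ac a" using eigenvalue_root_char_poly[OF Ac] by simp
    then obtain w where w: "w \<in> carrier_vec n" "w \<noteq> 0\<^sub>v n" "Ac *\<^sub>v w = a \<cdot>\<^sub>v w"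
      unfolding eigenvalue_def eigenvector_def using Ac by auto
    have "cmod a \<le> real n * 0" by (rule eig_bound[OF Ac hA w])
    thus ?thesis by simp
  qed
  hence "replicate (length as) 0 = as" by (intro replicate_length_same, auto)
  hence cp2: "char_poly Ac = [:- 0, 1:] ^ n" unfolding cp using len by (metis map_replicate prod_list_replicate)
  have "cmod l \<le> real n * real_of_int (height A)" by (rule l_bound[OF A xc xn xe])
  hence l0: "l = 0" using hz by simp
  have "Polynomial.order l (char_poly Ac) = 1" using simple unfolding simple_eigenvalue_def Ac_def .
  hence "n = 1" unfolding cp2 l0 order_linear_power by simp
  with n2 show False by simp
qed

theorem theorem3:
  fixes A :: "int mat" and n :: nat and l :: complex and x y :: "complex vec"
  assumes "A \<in> carrier_mat n n"
    and "simple_eigenvalue (map_mat of_int A) l"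
    and "x \<in> carrier_vec n" and "y \<in> carrier_vec n"
    and "vnorm x = 1" and "vnorm y = 1"
    and "map_mat of_int A *\<^sub>v x = l \<cdot>\<^sub>v x"
    and "transpose_mat (map_mat of_int A) *\<^sub>v conjugate y = l \<cdot>\<^sub>v conjugate y"
  shows "kappa_NSE x y \<le> real n ^ (3 * n) * 2 ^ (2 * n)
           * (2 * sqrt (real n) * real_of_int (height A)) ^ (2 * n ^ 3 - 2 * n)"
proof -
  note mb = main_bound[OF assms]
  have x0: "x \<noteq> 0\<^sub>v n" by (rule vnorm_nz[OF assms(3) assms(5)])
  have n0: "n \<noteq> 0" using x0 assms(3) by (metis carrier_vecD eq_vecI index_zero_vec(2) less_nat_zero_code)
  show ?thesis
  proof (cases "n = 1")
    case True
    show ?thesis using mb unfolding True by simp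
  next
    case False
    hence n2: "n \<ge> 2" using n0 by simp
    have H1: "1 \<le> real_of_int (height A)" using height_pos[OF assms(1,2,3,5,7) n2] by simp
    have lb: "cmod l \<le> real n * real_of_int (height A)" by (rule l_bound[OF assms(1,3,5,7)])
    show ?thesis by (rule order_trans[OF mb final_arith[OF n2 H1 lb norm_ge_zero]])
  qed
qed


end
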